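(* Let \(M\) be a torsionfree bornological \(V\)-module. Then the bornological \(V\)-module \(M'\) is nuclear, that is, every subset of \(M\) that is compactoid in \(M\) is also compactoid with respect to the bornology of \(M'\).
   Context: Let \(V\) be a complete discrete valuation ring with uniformiser \(\pi\). A bornology on a set is a collection of subsets (called bounded) containing all finite subsets and closed under finite unions and under taking subsets. A bornological \(V\)-module is a \(V\)-module \(M\) with a bornology such that every bounded subset is contained in a bounded \(V\)-submodule. \(M\) is torsionfree if it is torsionfree as a \(V\)-module and \(\pi^{-1}S=\{x\in M:\pi x\in S\}\) is bounded for every bounded \(S\). A subset \(S\subseteq M\) is compactoid if there is a bounded \(V\)-submodule \(T\subseteq M\) with \(S\subseteq T\) such that for every \(n\in\mathbb N\) there is a finite set \(F_n\subseteq T\) with \(S\subseteq VF_n+\pi^nT\). The compactoid subsets form a bornology; \(M'\) denotes \(M\) with this bornology. A bornological \(V\)-module is nuclear if each of its bounded subsets is compactoid (with respect to its own bornology). *)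

theory Defs
  imports Complex_Main
begin

text \<open>\<open>\<pi>\<close> is a uniformiser of the discrete valuation ring \<open>V\<close> (the ambient type):
  a nonzero non-unit such that every nonzero element is a unit times a power of \<open>\<pi>\<close>.\<close>
definition dvr_uniformiser :: "'v::idom \<Rightarrow> bool" where
  "dvr_uniformiser \<pi> \<longleftrightarrow> \<pi> \<noteq> 0 \<and> \<not> \<pi> dvd 1 \<and>
     (\<forall>x. x \<noteq> 0 \<longrightarrow> (\<exists>u n. u dvd 1 \<and> x = u * \<pi> ^ n))"

definition pi_adically_complete :: "'v::idom \<Rightarrow> bool" where
  "pi_adically_complete \<pi> \<longleftrightarrow>
     (\<forall>a :: nat \<Rightarrow> 'v. (\<forall>n. \<pi> ^ n dvd (a (Suc n) - a n)) \<longrightarrow>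
        (\<exists>l. \<forall>n. \<pi> ^ n dvd (l - a n)))"

definition complete_dvr :: "'v::idom \<Rightarrow> bool" where
  "complete_dvr \<pi> \<longleftrightarrow> dvr_uniformiser \<pi> \<and> pi_adically_complete \<pi>"

definition is_bornology :: "'m set set \<Rightarrow> bool" where
  "is_bornology B \<longleftrightarrow> (\<forall>F. finite F \<longrightarrow> F \<in> B) \<and>
     (\<forall>S\<in>B. \<forall>T\<in>B. S \<union> T \<in> B) \<and> (\<forall>S\<in>B. \<forall>T. T \<subseteq> S \<longrightarrow> T \<in> B)"

definition bornological_module ::
  "('v::comm_ring_1 \<Rightarrow> 'm::ab_group_add \<Rightarrow> 'm) \<Rightarrow> 'm set set \<Rightarrow> bool" where
  "bornological_module scale B \<longleftrightarrow> module scale \<and> is_bornology B \<and>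
     (\<forall>S\<in>B. \<exists>T\<in>B. module.subspace scale T \<and> S \<subseteq> T)"

definition torsionfree_bornological_module ::
  "('v::comm_ring_1 \<Rightarrow> 'm::ab_group_add \<Rightarrow> 'm) \<Rightarrow> 'v \<Rightarrow> 'm set set \<Rightarrow> bool" where
  "torsionfree_bornological_module scale \<pi> B \<longleftrightarrow> bornological_module scale B \<and>
     (\<forall>a x. scale a x = 0 \<longrightarrow> a = 0 \<or> x = 0) \<and>
     (\<forall>S\<in>B. {x. scale \<pi> x \<in> S} \<in> B)"

definition compactoid ::
  "('v::comm_ring_1 \<Rightarrow> 'm::ab_group_add \<Rightarrow> 'm) \<Rightarrow> 'v \<Rightarrow> 'm set set \<Rightarrow> 'm set \<Rightarrow> bool" where
  "compactoid scale \<pi> B S \<longleftrightarrow>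
     (\<exists>T\<in>B. module.subspace scale T \<and> S \<subseteq> T \<and>
        (\<forall>n::nat. \<exists>F. finite F \<and> F \<subseteq> T \<and>
           S \<subseteq> {a + b | a b. a \<in> module.span scale F \<and> b \<in> scale (\<pi> ^ n) ` T}))"

text \<open>The bornology of \<open>M'\<close>: the compactoid subsets.\<close>
definition compactoid_bornology ::
  "('v::comm_ring_1 \<Rightarrow> 'm::ab_group_add \<Rightarrow> 'm) \<Rightarrow> 'v \<Rightarrow> 'm set set \<Rightarrow> 'm set set" where
  "compactoid_bornology scale \<pi> B = {S. compactoid scale \<pi> B S}"

definition nuclear ::
  "('v::comm_ring_1 \<Rightarrow> 'm::ab_group_add \<Rightarrow> 'm) \<Rightarrow> 'v \<Rightarrow> 'm set set \<Rightarrow> bool" where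
  "nuclear scale \<pi> B \<longleftrightarrow> (\<forall>S\<in>B. compactoid scale \<pi> B S)"

end

theory Submission
  imports Defs
begin

lemma scale_hom:
  assumes "module scale"
  shows "module_hom scale scale (scale c)"
  using assms unfolding module_hom_iff
  by (simp add: module.scale_right_distrib module.scale_left_commute)

lemma subspace_scale_image:
  assumes "module scale" "module.subspace scale T"
  shows "module.subspace scale (scale c ` T)"
  using module_hom.subspace_image[OF scale_hom[OF assms(1)] assms(2)] .

lemma span_scale_image:
  assumes "module scale" "x \<in> module.span scale A"
  shows "scale c x \<in> module.span scale (scale c ` A)"
  using module_hom.span_image[OF scale_hom[OF assms(1)], of c A] assms(2) by auto

lemma sumset_span:
  assumes "module scale" "module.subspace scale Q"
  shows "{a + b | a b. a \<in> module.span scale F \<and> b \<in> Q} = module.span scale (F \<union> Q)"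
proof -
  interpret module scale by fact
  have "span Q = Q" using assms(2) span_eq_iff by blast
  show ?thesis by (subst span_Un, subst \<open>span Q = Q\<close>) (rule refl)
qed

lemma in_span_finite:
  assumes "module scale" "x \<in> module.span scale X"
  shows "\<exists>t. finite t \<and> t \<subseteq> X \<and> x \<in> module.span scale t"
proof -
  interpret module scale by fact
  from assms(2) obtain t r where "finite t" "t \<subseteq> X" "x = (\<Sum>a\<in>t. scale (r a) a)"
    unfolding span_explicit by blast
  moreover have "x \<in> span t" unfolding \<open>x = _\<close>
    by (rule span_sum, rule span_scale, rule span_base) simp
  ultimately show ?thesis by blast
qed

lemma lemA:
  fixes scale :: "'v::idom \<Rightarrow> 'm::ab_group_add \<Rightarrow> 'm" and \<pi> :: 'v
  assumes mod: "module scale" and dvr: "dvr_uniformiser \<pi>" and fin: "finite F"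
  shows "P \<subseteq> module.span scale X \<Longrightarrow> P \<subseteq> module.span scale (F \<union> Q) \<Longrightarrow>
     \<exists>E. finite E \<and> E \<subseteq> X \<and> P \<subseteq> module.span scale (E \<union> Q)"
  using fin
proof (induction F arbitrary: P)
  case empty
  then show ?case by (intro exI[of _ "{}"]) auto
next
  case (insert g F0)
  interpret module scale by fact
  define I where "I = {a. \<exists>x\<in>span X. x - scale a g \<in> span (F0 \<union> Q)}"
  define P' where "P' = span X \<inter> span (F0 \<union> Q)"
  obtain E' where E': "finite E'" "E' \<subseteq> X" "P' \<subseteq> span (E' \<union> Q)"
    using insert.IH[of P'] unfolding P'_def by auto
  have memI: "\<exists>a\<in>I. x - scale a g \<in> span (F0 \<union> Q)" if "x \<in> P" for x
  proof -
    have "x \<in> span (insert g (F0 \<union> Q))" using insert.prems that by auto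
    then obtain a where "x - scale a g \<in> span (F0 \<union> Q)" using span_breakdown_eq by blast
    moreover have "x \<in> span X" using insert.prems that by auto
    ultimately show ?thesis unfolding I_def by blast
  qed
  have Iscale: "c * a \<in> I" if "a \<in> I" for a c
  proof -
    from that obtain x where x: "x \<in> span X" "x - scale a g \<in> span (F0 \<union> Q)" unfolding I_def by blast
    have "scale c x - scale (c * a) g = scale c (x - scale a g)"
      by (simp add: scale_right_diff_distrib)
    then have "scale c x - scale (c * a) g \<in> span (F0 \<union> Q)" using x span_scale by metis
    moreover have "scale c x \<in> span X" using x span_scale by blast
    ultimately show ?thesis unfolding I_def by blast
  qed
  show ?case
  proof (cases "I \<subseteq> {0}")
    case True
    have "P \<subseteq> P'"
    proof
      fix x assume "x \<in> P"
      then obtain a where "a \<in> I" "x - scale a g \<in> span (F0 \<union> Q)" using memI by blast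
      then show "x \<in> P'" using True \<open>x \<in> P\<close> insert.prems unfolding P'_def by auto
    qed
    then show ?thesis using E' by blast
  next
    case False
    then obtain a0 where a0: "a0 \<in> I" "a0 \<noteq> 0" by blast
    then obtain u0 n0 where "u0 dvd 1" "a0 = u0 * \<pi> ^ n0" using dvr unfolding dvr_uniformiser_def by blast
    then have ex: "\<exists>u. u dvd 1 \<and> u * \<pi> ^ n0 \<in> I" using a0 by blast
    define n where "n = (LEAST n. \<exists>u. u dvd 1 \<and> u * \<pi> ^ n \<in> I)"
    have "\<exists>u. u dvd 1 \<and> u * \<pi> ^ n \<in> I" unfolding n_def by (rule LeastI_ex) (use ex in blast)
    then obtain u where u: "u dvd 1" "u * \<pi> ^ n \<in> I" by blast
    from u(1) obtain w where w: "1 = u * w" by (auto elim: dvdE)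
    have "w * (u * \<pi> ^ n) = \<pi> ^ n" using w by (simp add: algebra_simps)
    then have "\<pi> ^ n \<in> I" using Iscale[OF u(2), of w] by metis
    then obtain x0 where x0: "x0 \<in> span X" "x0 - scale (\<pi> ^ n) g \<in> span (F0 \<union> Q)"
      unfolding I_def by blast
    obtain t where t: "finite t" "t \<subseteq> X" "x0 \<in> span t" using in_span_finite[OF mod x0(1)] by blast
    have "P \<subseteq> span ((E' \<union> t) \<union> Q)"
    proof
      fix x assume xP: "x \<in> P"
      then obtain a where a: "a \<in> I" "x - scale a g \<in> span (F0 \<union> Q)" using memI by blast
      have xX: "x \<in> span X" using xP insert.prems by auto
      show "x \<in> span ((E' \<union> t) \<union> Q)"
      proof (cases "a = 0")
        case True
        then have "x \<in> P'" using a xX unfolding P'_def by simp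
        then show ?thesis using E'(3) span_mono[of "E' \<union> Q" "(E' \<union> t) \<union> Q"] by blast
      next
        case False
        then obtain v k where vk: "v dvd 1" "a = v * \<pi> ^ k" using dvr unfolding dvr_uniformiser_def by blast
        have "n \<le> k" unfolding n_def by (rule Least_le) (use vk a in blast)
        define c where "c = v * \<pi> ^ (k - n)"
        have ac: "a = c * \<pi> ^ n" unfolding c_def vk(2) using \<open>n \<le> k\<close>
          by (simp add: mult.assoc power_add[symmetric])
        define y where "y = x - scale c x0"
        have "y = (x - scale a g) - scale c (x0 - scale (\<pi> ^ n) g)"
          unfolding y_def ac by (simp add: scale_right_diff_distrib)
        then have "y \<in> span (F0 \<union> Q)" using a(2) x0(2) by (metis span_diff span_scale)
        moreover have "y \<in> span X" unfolding y_def using xX x0(1) by (metis span_diff span_scale)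
        ultimately have "y \<in> P'" unfolding P'_def by blast
        then have "y \<in> span ((E' \<union> t) \<union> Q)" using E'(3) span_mono[of "E' \<union> Q" "(E' \<union> t) \<union> Q"] by blast
        moreover have "scale c x0 \<in> span ((E' \<union> t) \<union> Q)"
          using t(3) span_mono[of t "(E' \<union> t) \<union> Q"] span_scale by blast
        ultimately have "y + scale c x0 \<in> span ((E' \<union> t) \<union> Q)" by (rule span_add)
        then show ?thesis unfolding y_def by simp
      qed
    qed
    then show ?thesis using E' t by (intro exI[of _ "E' \<union> t"]) auto
  qed
qed

lemma lemB:
  fixes scale :: "'v::idom \<Rightarrow> 'm::ab_group_add \<Rightarrow> 'm" and \<pi> :: 'v
  assumes mod: "module scale" and dvr: "dvr_uniformiser \<pi>"
    and tf: "\<forall>a x. scale a x = 0 \<longrightarrow> a = 0 \<or> x = 0"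
    and fin: "finite F"
    and sub: "scale (\<pi> ^ m) ` Y \<subseteq> module.span scale (F \<union> scale (\<pi> ^ (k + m)) ` T)"
  shows "\<exists>G. finite G \<and> G \<subseteq> Y \<and> Y \<subseteq> module.span scale (G \<union> scale (\<pi> ^ k) ` T)"
proof -
  interpret module scale by fact
  have pn: "\<pi> ^ m \<noteq> 0" using dvr unfolding dvr_uniformiser_def by simp
  obtain E where E: "finite E" "E \<subseteq> scale (\<pi> ^ m) ` Y"
      "scale (\<pi> ^ m) ` Y \<subseteq> span (E \<union> scale (\<pi> ^ (k + m)) ` T)"
    using lemA[OF mod dvr fin span_superset sub] by blast
  obtain G where G: "G \<subseteq> Y" "finite G" "E = scale (\<pi> ^ m) ` G"
    using finite_subset_image[OF E(1) E(2)] by blast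
  have eqimg: "E \<union> scale (\<pi> ^ (k + m)) ` T = scale (\<pi> ^ m) ` (G \<union> scale (\<pi> ^ k) ` T)"
    unfolding G(3) image_Un image_image by (simp add: power_add mult.commute)
  have "Y \<subseteq> span (G \<union> scale (\<pi> ^ k) ` T)"
  proof
    fix y assume y: "y \<in> Y"
    have "scale (\<pi> ^ m) y \<in> span (scale (\<pi> ^ m) ` (G \<union> scale (\<pi> ^ k) ` T))"
      using E(3) y eqimg by (metis image_eqI subsetD)
    also have "\<dots> = scale (\<pi> ^ m) ` span (G \<union> scale (\<pi> ^ k) ` T)"
      using module_hom.span_image[OF scale_hom[OF mod]] .
    finally obtain z where z: "z \<in> span (G \<union> scale (\<pi> ^ k) ` T)" "scale (\<pi> ^ m) y = scale (\<pi> ^ m) z"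
      by blast
    then have "scale (\<pi> ^ m) (y - z) = 0" by (simp add: scale_right_diff_distrib)
    then have "y = z" using tf pn by (metis eq_iff_diff_eq_0)
    then show "y \<in> span (G \<union> scale (\<pi> ^ k) ` T)" using z by simp
  qed
  then show ?thesis using G by blast
qed

theorem proposition3p7:
  fixes \<pi> :: "'v::idom"
    and scale :: "'v \<Rightarrow> 'm::ab_group_add \<Rightarrow> 'm"
    and B :: "'m set set"
  assumes "complete_dvr \<pi>"
    and "torsionfree_bornological_module scale \<pi> B"
  shows "nuclear scale \<pi> (compactoid_bornology scale \<pi> B)"
proof -
  have tfb: "bornological_module scale B \<and> (\<forall>a x. scale a x = 0 \<longrightarrow> a = 0 \<or> x = 0) \<and>
     (\<forall>S\<in>B. {x. scale \<pi> x \<in> S} \<in> B)"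
    using assms(2) unfolding torsionfree_bornological_module_def .
  have tf: "\<forall>a x. scale a x = 0 \<longrightarrow> a = 0 \<or> x = 0" using tfb by (rule conjunct1[OF conjunct2])
  have mod: "module scale" using conjunct1[OF tfb] unfolding bornological_module_def by (rule conjunct1)
  have dvr: "dvr_uniformiser \<pi>" using assms(1) unfolding complete_dvr_def by blast
  interpret module scale by fact
  show ?thesis unfolding nuclear_def compactoid_bornology_def
  proof (intro ballI, simp only: mem_Collect_eq)
    fix S assume "compactoid scale \<pi> B S"
    then obtain T where T: "T \<in> B" "subspace T" "S \<subseteq> T"
      and hF: "\<forall>n::nat. \<exists>F. finite F \<and> F \<subseteq> T \<and>
           S \<subseteq> {a + b | a b. a \<in> span F \<and> b \<in> scale (\<pi> ^ n) ` T}"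
      unfolding compactoid_def by blast
    have subT: "subspace (scale c ` T)" for c using subspace_scale_image[OF mod T(2)] .
    have "\<forall>n. \<exists>F. finite F \<and> F \<subseteq> T \<and> span S \<subseteq> span (F \<union> scale (\<pi> ^ n) ` T)"
    proof
      fix n
      from spec[OF hF, of n] obtain F where
        F: "finite F \<and> F \<subseteq> T \<and> S \<subseteq> {a + b | a b. a \<in> span F \<and> b \<in> scale (\<pi> ^ n) ` T}" ..
      have "S \<subseteq> span (F \<union> scale (\<pi> ^ n) ` T)"
        using conjunct2[OF conjunct2[OF F]] unfolding sumset_span[OF mod subT] .
      then have "span S \<subseteq> span (F \<union> scale (\<pi> ^ n) ` T)" using span_minimal[OF _ subspace_span] by blast
      then show "\<exists>F. finite F \<and> F \<subseteq> T \<and> span S \<subseteq> span (F \<union> scale (\<pi> ^ n) ` T)"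
        using F by (intro exI[of _ F]) simp
    qed
    then have "\<exists>FF. \<forall>n. finite (FF n) \<and> FF n \<subseteq> T \<and> span S \<subseteq> span (FF n \<union> scale (\<pi> ^ n) ` T)"
      by (rule choice)
    then obtain FF where FF0: "\<forall>n. finite (FF n) \<and> FF n \<subseteq> T \<and> span S \<subseteq> span (FF n \<union> scale (\<pi> ^ n) ` T)"
      ..
    have FF: "\<And>n. finite (FF n)" "\<And>n. FF n \<subseteq> T"
        "\<And>n. span S \<subseteq> span (FF n \<union> scale (\<pi> ^ n) ` T)"
      using FF0 by auto
    define Y where "Y m = {t \<in> T. scale (\<pi> ^ m) t \<in> span S}" for m
    have "\<forall>m k. \<exists>G. finite G \<and> G \<subseteq> Y m \<and> Y m \<subseteq> span (G \<union> scale (\<pi> ^ k) ` T)"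
    proof (intro allI)
      fix m k
      have "scale (\<pi> ^ m) ` Y m \<subseteq> span (FF (k + m) \<union> scale (\<pi> ^ (k + m)) ` T)"
        using FF(3)[of "k + m"] unfolding Y_def by auto
      then show "\<exists>G. finite G \<and> G \<subseteq> Y m \<and> Y m \<subseteq> span (G \<union> scale (\<pi> ^ k) ` T)"
        by (rule lemB[OF mod dvr tf FF(1)])
    qed
    note Gex = this
    have "\<forall>m. \<exists>GGm. \<forall>k. finite (GGm k) \<and> GGm k \<subseteq> Y m \<and> Y m \<subseteq> span (GGm k \<union> scale (\<pi> ^ k) ` T)"
    proof
      fix m show "\<exists>GGm. \<forall>k. finite (GGm k) \<and> GGm k \<subseteq> Y m \<and> Y m \<subseteq> span (GGm k \<union> scale (\<pi> ^ k) ` T)"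
        by (rule choice[OF spec[OF Gex, of m]])
    qed
    then have "\<exists>GG. \<forall>m. \<forall>k. finite (GG m k) \<and> GG m k \<subseteq> Y m \<and> Y m \<subseteq> span (GG m k \<union> scale (\<pi> ^ k) ` T)"
      by (rule choice)
    then obtain GG where GG0: "\<forall>m k. finite (GG m k) \<and> GG m k \<subseteq> Y m \<and> Y m \<subseteq> span (GG m k \<union> scale (\<pi> ^ k) ` T)"
      ..
    have GG: "\<And>m k. finite (GG m k)" "\<And>m k. GG m k \<subseteq> Y m"
        "\<And>m k. Y m \<subseteq> span (GG m k \<union> scale (\<pi> ^ k) ` T)"
      using GG0 by auto
    have Ecov: "\<exists>E. finite E \<and> E \<subseteq> S \<and> S \<subseteq> span (E \<union> scale (\<pi> ^ k) ` T)" for k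
      by (rule lemA[OF mod dvr FF(1)[of k] span_superset order.trans[OF span_superset FF(3)[of k]]])
    define W where "W = (\<Union>n. (\<lambda>t. scale (\<pi> ^ n) t) ` Y (2 * n))"
    define T' where "T' = span W"
    have YT: "Y m \<subseteq> T" for m unfolding Y_def by auto
    have "W \<subseteq> T"
    proof
      fix w assume "w \<in> W"
      then obtain n y where "y \<in> Y (2 * n)" "w = scale (\<pi> ^ n) y" unfolding W_def by blast
      then show "w \<in> T" using YT T(2) subspace_scale by blast
    qed
    then have T'T: "T' \<subseteq> T" unfolding T'_def using span_minimal T(2) by blast
    have ST': "S \<subseteq> T'"
    proof
      fix s assume "s \<in> S"
      then have "s \<in> Y (2 * 0)" unfolding Y_def using T(3) span_base by auto
      then have "scale (\<pi> ^ 0) s \<in> W" unfolding W_def by blast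
      then show "s \<in> T'" unfolding T'_def using span_base by simp
    qed
    have compT': "compactoid scale \<pi> B T'"
      unfolding compactoid_def
    proof (intro bexI[of _ T] conjI allI)
      fix k
      define G where "G = (\<Union>n<k. scale (\<pi> ^ n) ` GG (2 * n) k)"
      have "finite G" unfolding G_def using GG(1) by auto
      moreover have "G \<subseteq> T" unfolding G_def using GG(2) YT T(2) subspace_scale by blast
      moreover have "T' \<subseteq> span (G \<union> scale (\<pi> ^ k) ` T)"
        unfolding T'_def
      proof (rule span_minimal[OF _ subspace_span], rule subsetI)
        fix w assume "w \<in> W"
        then obtain n y where ny: "y \<in> Y (2 * n)" "w = scale (\<pi> ^ n) y" unfolding W_def by blast
        show "w \<in> span (G \<union> scale (\<pi> ^ k) ` T)"
        proof (cases "n < k")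
          case True
          have "y \<in> span (GG (2 * n) k \<union> scale (\<pi> ^ k) ` T)" using GG(3) ny(1) by blast
          then have "w \<in> span (scale (\<pi> ^ n) ` (GG (2 * n) k \<union> scale (\<pi> ^ k) ` T))"
            unfolding ny(2) by (rule span_scale_image[OF mod])
          moreover have "scale (\<pi> ^ n) ` (GG (2 * n) k \<union> scale (\<pi> ^ k) ` T) \<subseteq> G \<union> scale (\<pi> ^ k) ` T"
          proof
            fix z assume "z \<in> scale (\<pi> ^ n) ` (GG (2 * n) k \<union> scale (\<pi> ^ k) ` T)"
            then consider g where "g \<in> GG (2 * n) k" "z = scale (\<pi> ^ n) g"
              | t where "t \<in> T" "z = scale (\<pi> ^ n) (scale (\<pi> ^ k) t)" by blast
            then show "z \<in> G \<union> scale (\<pi> ^ k) ` T"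
            proof cases
              case 1 then show ?thesis unfolding G_def using True by blast
            next
              case 2
              then have "z = scale (\<pi> ^ k) (scale (\<pi> ^ n) t)" by (simp add: mult.commute)
              moreover have "scale (\<pi> ^ n) t \<in> T" using 2 T(2) subspace_scale by blast
              ultimately show ?thesis by blast
            qed
          qed
          ultimately show ?thesis using span_mono by blast
        next
          case False
          then have "w = scale (\<pi> ^ k) (scale (\<pi> ^ (n - k)) y)" unfolding ny(2)
            by (simp add: power_add[symmetric])
          moreover have "scale (\<pi> ^ (n - k)) y \<in> T" using ny(1) YT T(2) subspace_scale by blast
          ultimately show ?thesis by (blast intro: span_base)
        qed
      qed
      ultimately show "\<exists>F. finite F \<and> F \<subseteq> T \<and>
           T' \<subseteq> {a + b | a b. a \<in> span F \<and> b \<in> scale (\<pi> ^ k) ` T}"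
        unfolding sumset_span[OF mod subT] by blast
    qed (use T T'T in auto)
    show "compactoid scale \<pi> {S. compactoid scale \<pi> B S} S"
      unfolding compactoid_def[of scale \<pi> "{S. compactoid scale \<pi> B S}"]
    proof (intro bexI[of _ T'] conjI allI)
      show "T' \<in> {S. compactoid scale \<pi> B S}" using compT' by simp
      show "subspace T'" unfolding T'_def by simp
      show "S \<subseteq> T'" by fact
      fix n
      obtain E where E: "finite E" "E \<subseteq> S" "S \<subseteq> span (E \<union> scale (\<pi> ^ (2 * n)) ` T)"
        using Ecov by blast
      have "S \<subseteq> {a + b | a b. a \<in> span E \<and> b \<in> scale (\<pi> ^ n) ` T'}"
      proof
        fix s assume s: "s \<in> S"
        have "s \<in> {a + b | a b. a \<in> span E \<and> b \<in> scale (\<pi> ^ (2 * n)) ` T}"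
          unfolding sumset_span[OF mod subT] using E(3) s by blast
        then obtain a b where ab: "a \<in> span E" "b \<in> scale (\<pi> ^ (2 * n)) ` T" "s = a + b"
          by blast
        then obtain t where t: "t \<in> T" "b = scale (\<pi> ^ (2 * n)) t" by blast
        have "a \<in> span S" using ab(1) E(2) span_mono by blast
        moreover have "s \<in> span S" using s span_base by blast
        ultimately have "b \<in> span S" using ab(3) span_diff by (metis add_diff_cancel_left')
        then have "t \<in> Y (2 * n)" unfolding Y_def using t by simp
        then have "scale (\<pi> ^ n) t \<in> T'" unfolding T'_def W_def by (blast intro: span_base)
        moreover have "b = scale (\<pi> ^ n) (scale (\<pi> ^ n) t)" using t(2)
          by (simp add: power_add[symmetric] mult_2)
        ultimately show "s \<in> {a + b | a b. a \<in> span E \<and> b \<in> scale (\<pi> ^ n) ` T'}"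
          using ab by blast
      qed
      then show "\<exists>F. finite F \<and> F \<subseteq> T' \<and> S \<subseteq> {a + b | a b. a \<in> span F \<and> b \<in> scale (\<pi> ^ n) ` T'}"
        using E ST' by blast
    qed
  qed
qed

end
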